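(* For any $d\in\mathbb{N}$ and positive integers $m_1,\dots,m_{2d}$, the matrix $\mathsf{C}\mathsf{W}(m_1,\dots,m_{2d})$ has five distinct positive real eigenvalues, namely $1$ and $$\frac{t+4s\pm\sqrt{(t+4s)^2-4}}{2},\qquad \frac{t\pm\sqrt{t^2-4}}{2},$$ where $t=\operatorname{tr}(W_1(m_1,\dots,m_{2d}))$ and $s=\operatorname{tr}^*(W_1(m_1,\dots,m_{2d}))$. Moreover $$\frac{t+4s+\sqrt{(t+4s)^2-4}}{2}>\frac{t+\sqrt{t^2-4}}{2}>1>\frac{t-\sqrt{t^2-4}}{2}>\frac{t+4s-\sqrt{(t+4s)^2-4}}{2}.$$
   Context: $A_1=\begin{pmatrix}1&1\\0&1\end{pmatrix}$, $B_1=\begin{pmatrix}1&0\\1&1\end{pmatrix}$, $W_1(m_1,\dots,m_{2d})=\prod_{i=1}^dA_1^{m_{2i-1}}B_1^{m_{2i}}$. With $\mathsf{A}=\begin{pmatrix}1&1&0&0&2\\0&1&0&0&0\\0&0&1&1&0\\0&0&0&1&0\\0&0&0&0&1\end{pmatrix}$, $\mathsf{B}=\begin{pmatrix}1&0&0&0&0\\1&1&0&0&0\\0&0&1&0&0\\0&0&1&1&2\\0&0&0&0&1\end{pmatrix}$, $\mathsf{C}=\begin{pmatrix}1&0&0&0&0\\0&1&0&0&0\\0&0&1&0&0\\0&0&0&1&0\\2&0&0&2&1\end{pmatrix}$, let $\mathsf{W}(m_1,\dots,m_{2d})=\prod_{i=1}^d\mathsf{A}^{m_{2i-1}}\mathsf{B}^{m_{2i}}$.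 $\operatorname{tr}^*(M)=M_{1,2}+M_{2,1}$ is the anti-trace. *)

theory Defs
  imports "Jordan_Normal_Form.Matrix" "Jordan_Normal_Form.Char_Poly"
begin

definition A1 :: "real mat" where
  "A1 = mat_of_rows_list 2 [[1,1],[0,1]]"

definition B1 :: "real mat" where
  "B1 = mat_of_rows_list 2 [[1,0],[1,1]]"

definition Am :: "real mat" where
  "Am = mat_of_rows_list 5
     [[1,1,0,0,2],
      [0,1,0,0,0],
      [0,0,1,1,0],
      [0,0,0,1,0],
      [0,0,0,0,1]]"

definition Bm :: "real mat" where
  "Bm = mat_of_rows_list 5
     [[1,0,0,0,0],
      [1,1,0,0,0],
      [0,0,1,0,0],
      [0,0,1,1,2],
      [0,0,0,0,1]]"

definition Cm :: "real mat" where
  "Cm = mat_of_rows_list 5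
     [[1,0,0,0,0],
      [0,1,0,0,0],
      [0,0,1,0,0],
      [0,0,0,1,0],
      [2,0,0,2,1]]"

text \<open>Generic word: product over i = 1..d of X^(m_(2i-1)) Y^(m_(2i)),
  with the exponents m_1..m_(2d) stored as m 0, ..., m (2d-1); product taken left to right.\<close>
fun word :: "nat \<Rightarrow> real mat \<Rightarrow> real mat \<Rightarrow> (nat \<Rightarrow> nat) \<Rightarrow> nat \<Rightarrow> real mat" where
  "word n X Y m 0 = 1\<^sub>m n"
| "word n X Y m (Suc k) = word n X Y m k * (X ^\<^sub>m m (2*k) * Y ^\<^sub>m m (2*k+1))"

definition W1 :: "(nat \<Rightarrow> nat) \<Rightarrow> nat \<Rightarrow> real mat" where
  "W1 m d = word 2 A1 B1 m d"

definition Wm :: "(nat \<Rightarrow> nat) \<Rightarrow> nat \<Rightarrow> real mat" where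
  "Wm m d = word 5 Am Bm m d"

definition tr2 :: "real mat \<Rightarrow> real" where
  "tr2 M = M $$ (0,0) + M $$ (1,1)"

definition antitr :: "real mat \<Rightarrow> real" where
  "antitr M = M $$ (0,1) + M $$ (1,0)"

end

theory Submission
  imports Defs "Jordan_Normal_Form.Determinant"
begin


definition F :: "real mat \<Rightarrow> real mat" where
  "F M = mat_of_rows_list 5
     [[M$$(0,0), M$$(0,1), 0, 0, 2*M$$(0,1)],
      [M$$(1,0), M$$(1,1), 0, 0, 2*M$$(1,1) - 2],
      [0, 0, M$$(0,0), M$$(0,1), 2*M$$(0,0) - 2],
      [0, 0, M$$(1,0), M$$(1,1), 2*M$$(1,0)],
      [0,0,0,0,1]]"

lemma less5: "(i::nat) < 5 \<longleftrightarrow> i = 0 \<or> i = 1 \<or> i = 2 \<or> i = 3 \<or> i = 4" by auto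
lemma less_Suc_eq: "(i::nat) < 2 \<longleftrightarrow> i = 0 \<or> i = 1" by auto

lemma sum5: "(\<Sum>i\<in>{0..<5::nat}. f i) = f 0 + f 1 + f 2 + f 3 + f 4"
  by (simp add: numeral_eq_Suc atLeast0LessThan lessThan_Suc add_ac)
lemma sum2: "(\<Sum>i\<in>{0..<2::nat}. f i) = f 0 + f 1"
  by (simp add: numeral_eq_Suc atLeast0LessThan lessThan_Suc add_ac)

lemma F_dim[simp]: "dim_row (F M) = 5" "dim_col (F M) = 5" by (simp_all add: F_def mat_of_rows_list_def)
lemma F_carrier: "F M \<in> carrier_mat 5 5" by (rule carrier_matI) simp_all
lemma A1_dim[simp]: "dim_row A1 = 2" "dim_col A1 = 2" by (simp_all add: A1_def mat_of_rows_list_def)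
lemma B1_dim[simp]: "dim_row B1 = 2" "dim_col B1 = 2" by (simp_all add: B1_def mat_of_rows_list_def)

lemma F_mult:
  assumes "X \<in> carrier_mat 2 2" "Y \<in> carrier_mat 2 2"
  shows "F (X * Y) = F X * F Y"
proof (rule eq_matI)
  fix i j assume ij: "i < dim_row (F X * F Y)" "j < dim_col (F X * F Y)"
  have i: "i = 0 \<or> i = 1 \<or> i = 2 \<or> i = 3 \<or> i = 4" using ij by auto
  have j: "j = 0 \<or> j = 1 \<or> j = 2 \<or> j = 3 \<or> j = 4" using ij by auto
  have xy: "(X*Y) $$ (r,s) = X$$(r,0)*Y$$(0,s) + X$$(r,1)*Y$$(1,s)" if "r < 2" "s < 2" for r s
    using assms that by (simp add: scalar_prod_def sum2)
  have "(F X * F Y) $$ (i,j) = (\<Sum>k\<in>{0..<5}. F X $$ (i,k) * F Y $$ (k,j))"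
    using ij by (simp add: scalar_prod_def)
  also have "\<dots> = F (X*Y) $$ (i,j)"
    unfolding sum5 using i j
    by (elim disjE) (simp_all add: F_def mat_of_rows_list_def xy algebra_simps)
  finally show "F (X * Y) $$ (i, j) = (F X * F Y) $$ (i, j)" by simp
qed auto

lemma F_one: "F (1\<^sub>m 2) = 1\<^sub>m 5"
  by (rule eq_matI) (auto simp: F_def mat_of_rows_list_def less5)

lemma F_A: "F A1 = Am"
  by (rule eq_matI) (auto simp: F_def A1_def Am_def mat_of_rows_list_def less5)
lemma F_B: "F B1 = Bm"
  by (rule eq_matI) (auto simp: F_def B1_def Bm_def mat_of_rows_list_def less5)

lemma A1c: "A1 \<in> carrier_mat 2 2" by (rule carrier_matI) simp_all
lemma B1c: "B1 \<in> carrier_mat 2 2" by (rule carrier_matI) simp_all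

lemma F_pow: "X \<in> carrier_mat 2 2 \<Longrightarrow> F (X ^\<^sub>m n) = F X ^\<^sub>m n"
proof (induction n)
  case (Suc n) show ?case unfolding pow_mat.simps F_mult[OF pow_carrier_mat[OF Suc.prems] Suc.prems] Suc.IH[OF Suc.prems] ..
qed (simp add: F_one)

lemma word_c: "word 2 A1 B1 m k \<in> carrier_mat 2 2"
proof (induction k)
  case (Suc k) show ?case unfolding word.simps
    by (rule mult_carrier_mat[OF Suc.IH mult_carrier_mat[OF pow_carrier_mat[OF A1c] pow_carrier_mat[OF B1c]]])
qed simp

lemma F_word: "F (word 2 A1 B1 m k) = word 5 Am Bm m k"
proof (induction k)
  case 0 show ?case by (simp add: F_one)
next
  case (Suc k)
  have c1: "A1 ^\<^sub>m m (2*k) \<in> carrier_mat 2 2" "B1 ^\<^sub>m m (2*k+1) \<in> carrier_mat 2 2"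
    by (rule pow_carrier_mat, rule A1c)+ (rule pow_carrier_mat, rule B1c)
  have c2: "A1 ^\<^sub>m m (2*k) * B1 ^\<^sub>m m (2*k+1) \<in> carrier_mat 2 2"
    by (rule mult_carrier_mat[OF c1])
  have "F (word 2 A1 B1 m (Suc k)) = F (word 2 A1 B1 m k) * F (A1 ^\<^sub>m m (2*k) * B1 ^\<^sub>m m (2*k+1))"
    unfolding word.simps by (rule F_mult[OF word_c c2])
  also have "\<dots> = word 5 Am Bm m k * (F (A1 ^\<^sub>m m (2*k)) * F (B1 ^\<^sub>m m (2*k+1)))"
    unfolding Suc.IH F_mult[OF c1] ..
  also have "\<dots> = word 5 Am Bm m (Suc k)"
    unfolding F_pow[OF A1c] F_pow[OF B1c] F_A F_B word.simps ..
  finally show ?case .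
qed

lemma mat2_eqI:
  assumes "A \<in> carrier_mat 2 2" "B \<in> carrier_mat 2 2"
    "A$$(0,0) = B$$(0,0)" "A$$(0,1) = B$$(0,1)" "A$$(1,0) = B$$(1,0)" "A$$(1,1) = B$$(1,1)"
  shows "A = B"
proof (rule eq_matI)
  fix i j assume "i < dim_row B" "j < dim_col B"
  then have "i = 0 \<or> i = 1" "j = 0 \<or> j = 1" using assms(2) by auto
  then show "A $$ (i, j) = B $$ (i, j)" using assms by auto
qed (use assms in auto)

lemma m2c: "mat_of_rows_list 2 [[x,y],[z,w]] \<in> carrier_mat 2 2"
  by (rule carrier_matI) (simp_all add: mat_of_rows_list_def)

lemma m2i: "mat_of_rows_list 2 [[x,y],[z,w]] $$ (0,0) = x"
  "mat_of_rows_list 2 [[x,y],[z,w]] $$ (0,1) = y"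
  "mat_of_rows_list 2 [[x,y],[z,w]] $$ (1,0) = z"
  "mat_of_rows_list 2 [[x,y],[z,w]] $$ (1,1) = w"
  by (simp_all add: mat_of_rows_list_def)

lemma m2i'[simp]: "mat_of_rows_list 2 [[x,y],[z,w]] $$ (0,Suc 0) = y"
  "mat_of_rows_list 2 [[x,y],[z,w]] $$ (Suc 0,0) = z"
  "mat_of_rows_list 2 [[x,y],[z,w]] $$ (Suc 0,Suc 0) = w"
  "mat_of_rows_list 2 [[x,y],[z,w]] $$ (0,0) = x"
  by (simp_all add: mat_of_rows_list_def)

lemma mult2:
  assumes "X \<in> carrier_mat 2 2" "Y \<in> carrier_mat 2 2"
  shows "X * Y = mat_of_rows_list 2
    [[X$$(0,0)*Y$$(0,0) + X$$(0,1)*Y$$(1,0), X$$(0,0)*Y$$(0,1) + X$$(0,1)*Y$$(1,1)],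
     [X$$(1,0)*Y$$(0,0) + X$$(1,1)*Y$$(1,0), X$$(1,0)*Y$$(0,1) + X$$(1,1)*Y$$(1,1)]]"
  by (rule mat2_eqI) (use assms in \<open>simp_all add: m2c m2i scalar_prod_def sum2\<close>)

lemma mult2m: "mat_of_rows_list 2 [[x,y],[z,w]] * mat_of_rows_list 2 [[x',y'],[z',w']] =
  mat_of_rows_list 2 [[x*x'+y*z', x*y'+y*w'],[z*x'+w*z', z*y'+w*(w'::real)]]"
  by (subst mult2[OF m2c m2c]) (simp only: m2i)

lemma A1e: "A1 = mat_of_rows_list 2 [[1,1],[0,1]]" by (simp add: A1_def)
lemma B1e: "B1 = mat_of_rows_list 2 [[1,0],[1,1]]" by (simp add: B1_def)
lemma one2: "1\<^sub>m 2 = mat_of_rows_list 2 [[1,0],[0,1::real]]"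
  by (rule mat2_eqI) (simp_all add: m2c m2i)

lemma A1_pow: "A1 ^\<^sub>m p = mat_of_rows_list 2 [[1, real p],[0,1]]"
proof (induction p)
  case 0 show ?case using one2 by simp
next
  case (Suc p) show ?case unfolding pow_mat.simps Suc
    unfolding A1e mult2m by simp
qed

lemma B1_pow: "B1 ^\<^sub>m p = mat_of_rows_list 2 [[1, 0],[real p,1]]"
proof (induction p)
  case 0 show ?case using one2 by simp
next
  case (Suc p) show ?case unfolding pow_mat.simps Suc
    unfolding B1e mult2m by (simp add: ac_simps)
qed

lemma AB: "A1 ^\<^sub>m p * B1 ^\<^sub>m q = mat_of_rows_list 2 [[1 + real p * real q, real p],[real q,1]]"
  unfolding A1_pow B1_pow mult2m by simp

definition Q :: "real mat \<Rightarrow> bool" where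
  "Q W \<longleftrightarrow> W$$(0,0) \<ge> 1 \<and> W$$(0,1) \<ge> 0 \<and> W$$(1,0) \<ge> 0 \<and> W$$(1,1) \<ge> 1
     \<and> W$$(0,0) * W$$(1,1) - W$$(0,1) * W$$(1,0) = 1"

definition S :: "real mat \<Rightarrow> bool" where
  "S W \<longleftrightarrow> W$$(0,0) \<ge> 2 \<and> W$$(0,1) \<ge> 1 \<and> W$$(1,0) \<ge> 1 \<and> W$$(1,1) \<ge> 1
     \<and> W$$(0,0) * W$$(1,1) - W$$(0,1) * W$$(1,0) = 1"

lemma step:
  assumes "W \<in> carrier_mat 2 2" "Q W" "p \<ge> 1" "q \<ge> 1"
  shows "S (W * (A1 ^\<^sub>m p * B1 ^\<^sub>m q))"
proof -
  define a where "a = W$$(0,0)"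
  define b where "b = W$$(0,1)"
  define c where "c = W$$(1,0)"
  define e where "e = W$$(1,1)"
  have pq: "real p \<ge> 1" "real q \<ge> 1" using assms by auto
  have h: "a \<ge> 1" "b \<ge> 0" "c \<ge> 0" "e \<ge> 1" "a*e - b*c = 1"
    using assms(2) unfolding Q_def a_def b_def c_def e_def by auto
  have pp: "real p * real q \<ge> 1" using mult_mono[OF pq] by simp
  have "S (mat_of_rows_list 2 [[a * (1 + real p * real q) + b * real q, a * real p + b],
                               [c * (1 + real p * real q) + e * real q, c * real p + e]])"
    unfolding S_def m2i
  proof (intro conjI)
    show "2 \<le> a * (1 + real p * real q) + b * real q"
    proof -
      have "1*2 \<le> a * (1 + real p * real q)" using h pp by (intro mult_mono) auto
      moreover have "b * real q \<ge> 0" using h by simp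
      ultimately show ?thesis by linarith
    qed
    show "1 \<le> a * real p + b"
    proof -
      have "1*1 \<le> a * real p" using h pq by (intro mult_mono) auto
      then show ?thesis using h by linarith
    qed
    show "1 \<le> c * (1 + real p * real q) + e * real q"
    proof -
      have "1*1 \<le> e * real q" using h pq by (intro mult_mono) auto
      moreover have "c * (1 + real p * real q) \<ge> 0" using h pp by simp
      ultimately show ?thesis by linarith
    qed
    show "1 \<le> c * real p + e"
    proof -
      have "c * real p \<ge> 0" using h by simp
      then show ?thesis using h by linarith
    qed
    show "(a * (1 + real p * real q) + b * real q) * (c * real p + e) -
      (a * real p + b) * (c * (1 + real p * real q) + e * real q) = 1"
      using h(5) by (simp add: algebra_simps)
  qed
  moreover have "W * (A1 ^\<^sub>m p * B1 ^\<^sub>m q) = mat_of_rows_list 2 [[a * (1 + real p * real q) + b * real q, a * real p + b],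
                               [c * (1 + real p * real q) + e * real q, c * real p + e]]"
    unfolding AB a_def b_def c_def e_def using assms(1)
    by (subst mult2[OF assms(1) m2c]) (simp add: m2i)
  ultimately show ?thesis by simp
qed

lemma S_Q: "S W \<Longrightarrow> Q W" unfolding S_def Q_def by auto

lemma word_Q: "(\<And>i. i < 2*k \<Longrightarrow> m i > 0) \<Longrightarrow> Q (word 2 A1 B1 m k)"
proof (induction k)
  case 0 show ?case by (simp add: Q_def)
next
  case (Suc k)
  have IH: "Q (word 2 A1 B1 m k)" using Suc.IH Suc.prems by auto
  have p: "m (2*k) \<ge> 1" "m (2*k+1) \<ge> 1" using Suc.prems[of "2*k"] Suc.prems[of "2*k+1"] by auto
  have "S (word 2 A1 B1 m k * (A1 ^\<^sub>m m (2*k) * B1 ^\<^sub>m m (2*k+1)))"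
    by (rule step[OF word_c IH p])
  then show ?case unfolding word.simps by (rule S_Q)
qed

lemma word_S: "(\<And>i. i < 2*k \<Longrightarrow> m i > 0) \<Longrightarrow> k \<ge> 1 \<Longrightarrow> S (word 2 A1 B1 m k)"
proof (cases k)
  case (Suc j)
  assume a: "\<And>i. i < 2*k \<Longrightarrow> m i > 0"
  have IH: "Q (word 2 A1 B1 m j)" using a Suc by (intro word_Q) auto
  have p: "m (2*j) \<ge> 1" "m (2*j+1) \<ge> 1" using a[of "2*j"] a[of "2*j+1"] Suc by auto
  have "S (word 2 A1 B1 m j * (A1 ^\<^sub>m m (2*j) * B1 ^\<^sub>m m (2*j+1)))"
    by (rule step[OF word_c IH p])
  then show ?thesis unfolding Suc word.simps .
qed simp



definition del :: "nat \<Rightarrow> nat \<Rightarrow> 'a list \<Rightarrow> 'a list" where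
  "del n j r = map (\<lambda>j'. r ! (if j' < j then j' else Suc j')) [0..<n]"

lemma det_rows:
  fixes L :: "'a::comm_ring_1 list list"
  assumes "length L = Suc n"
  shows "det (mat_of_rows_list (Suc n) L) =
    (\<Sum>j<Suc n. L!0!j * ((-1)^j * det (mat_of_rows_list n (map (del n j) (tl L)))))"
proof -
  have A: "mat_of_rows_list (Suc n) L \<in> carrier_mat (Suc n) (Suc n)"
    using assms by (simp add: mat_of_rows_list_def)
  have md: "mat_delete (mat_of_rows_list (Suc n) L) 0 j = mat_of_rows_list n (map (del n j) (tl L))" for j
    by (rule eq_matI) (use assms in \<open>auto simp: mat_delete_def mat_of_rows_list_def del_def nth_tl\<close>)
  show ?thesis
    unfolding laplace_expansion_row[OF A, of 0, simplified] cofactor_def md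
    using assms by (simp add: mat_of_rows_list_def)
qed

lemma det_rows0: "det (mat_of_rows_list 0 []) = 1"
  by (simp add: mat_of_rows_list_def)

lemma det5:
  fixes a b c e k :: real
  assumes "a*e - b*c = 1"
  shows "det (mat_of_rows_list 5 [[a-k,b,0,0,2*b],[c,e-k,0,0,2*e-2],[0,0,a-k,b,2*a-2],[0,0,c,e-k,2*c],[2*a,2*b,2*c,2*e,4*b+4*c+1-k]])
   = - (k-1) * (k^2 - (a+e)*k + 1) * (k^2 - (a+e+4*(b+c))*k+1)"
proof -
  have "det (mat_of_rows_list 5 [[a-k,b,0,0,2*b],[c,e-k,0,0,2*e-2],[0,0,a-k,b,2*a-2],[0,0,c,e-k,2*c],[2*a,2*b,2*c,2*e,4*b+4*c+1-k]])
    = - (k-1) * (k^2 - (a+e)*k + (a*e-b*c)) * (k^2 - (a+e+4*(b+c))*k+(a*e-b*c))"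
    by (simp add: det_rows det_rows0 del_def numeral_eq_Suc lessThan_Suc algebra_simps power2_eq_square)
  then show ?thesis using assms by simp
qed
lemma Cm_dim[simp]: "dim_row Cm = 5" "dim_col Cm = 5" by (simp_all add: Cm_def mat_of_rows_list_def)

lemma CF:
  fixes k :: real
  shows "char_matrix (Cm * F W) k = mat_of_rows_list 5
    [[W$$(0,0)-k,W$$(0,1),0,0,2*W$$(0,1)],[W$$(1,0),W$$(1,1)-k,0,0,2*W$$(1,1)-2],
     [0,0,W$$(0,0)-k,W$$(0,1),2*W$$(0,0)-2],[0,0,W$$(1,0),W$$(1,1)-k,2*W$$(1,0)],
     [2*W$$(0,0),2*W$$(0,1),2*W$$(1,0),2*W$$(1,1),4*W$$(0,1)+4*W$$(1,0)+1-k]]"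
    (is "_ = ?R")
proof (rule eq_matI)
  fix i j assume ij: "i < dim_row ?R" "j < dim_col ?R"
  have i: "i = 0 \<or> i = 1 \<or> i = 2 \<or> i = 3 \<or> i = 4" using ij by (auto simp: mat_of_rows_list_def)
  have j: "j = 0 \<or> j = 1 \<or> j = 2 \<or> j = 3 \<or> j = 4" using ij by (auto simp: mat_of_rows_list_def)
  have i5: "i < 5" "j < 5" using i j by auto
  have "char_matrix (Cm * F W) k $$ (i,j) = (\<Sum>l\<in>{0..<5}. Cm $$ (i,l) * F W $$ (l,j)) - (if i = j then k else 0)"
    using i5 by (simp add: char_matrix_def scalar_prod_def)
  also have "\<dots> = ?R $$ (i,j)"
    unfolding sum5 using i j
    by (elim disjE) (simp_all add: F_def Cm_def mat_of_rows_list_def algebra_simps)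
  finally show "char_matrix (Cm * F W) k $$ (i, j) = ?R $$ (i, j)" .
qed (simp_all add: char_matrix_def mat_of_rows_list_def)

lemma quad:
  fixes t k :: real
  assumes "t > 2"
  shows "k^2 - t*k + 1 = 0 \<longleftrightarrow> k = (t + sqrt (t^2-4))/2 \<or> k = (t - sqrt (t^2-4))/2"
proof -
  define r where "r = sqrt (t^2-4)"
  have "t^2 - 4 = (t-2)*(t+2)" by (simp add: power2_eq_square algebra_simps)
  hence t2: "t^2 - 4 \<ge> 0" using assms by simp
  have r2: "r^2 = t^2 - 4" unfolding r_def using t2 by simp
  have "k^2 - t*k + 1 = (k - (t+r)/2) * (k - (t-r)/2)"
    using r2 by (simp add: algebra_simps power2_eq_square field_simps)
  then show ?thesis unfolding r_def[symmetric] by simp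
qed

lemma order:
  fixes t u :: real
  assumes "2 < t" "t < u"
    and r_def: "r = sqrt (t^2-4)" and R_def: "R = sqrt (u^2 - 4)"
  shows "(u+R)/2 > (t+r)/2 \<and> (t+r)/2 > 1 \<and> 1 > (t-r)/2 \<and> (t-r)/2 > (u-R)/2 \<and> (u-R)/2 > 0"
proof -
  have "t^2 - 4 = (t-2)*(t+2)" by (simp add: power2_eq_square algebra_simps)
  hence t2: "t^2 - 4 > 0" using assms by simp
  have "u^2 - 4 = (u-2)*(u+2)" by (simp add: power2_eq_square algebra_simps)
  hence u2: "u^2 - 4 > 0" using assms by simp
  have "u^2 - t^2 = (u-t)*(u+t)" by (simp add: power2_eq_square algebra_simps)
  hence tu: "t^2 - 4 < u^2 - 4" using assms mult_pos_pos[of "u-t" "u+t"] by linarith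
  have rR: "r < R" unfolding r_def R_def using tu by simp
  have r0: "r > 0" unfolding r_def using t2 by simp
  have r2: "r^2 = t^2 - 4" unfolding r_def using t2 by simp
  have R2: "R^2 = u^2 - 4" unfolding R_def using u2 by simp
  have R0: "R > 0" using rR r0 by simp
  have a1: "r > t - 2"
  proof -
    have "r^2 - (t-2)^2 = 4*t - 8" using r2 by (simp add: power2_eq_square algebra_simps)
    hence "(t-2)^2 < r^2" using assms by simp
    then show ?thesis using r0 by (smt (verit) power_mono)
  qed
  have p1: "(t-r)*(t+r) = 4" using r2 by (simp add: algebra_simps power2_eq_square)
  have p2: "(u-R)*(u+R) = 4" using R2 by (simp add: algebra_simps power2_eq_square)
  have tr: "t - r = 4/(t+r)" using p1 r0 assms(1) by (simp add: eq_divide_eq)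
  have uR: "u - R = 4/(u+R)" using p2 R0 assms(1,2) by (simp add: eq_divide_eq)
  have "4/(t+r) > 4/(u+R)" using rR r0 R0 assms(1,2) by (intro divide_strict_left_mono) (auto intro: mult_pos_pos)
  moreover have "4/(u+R) > 0" using R0 assms(1,2) by simp
  ultimately have "t - r > u - R" "u - R > 0" using tr uR by linarith+
  note f = this rR r0 a1 assms(1,2)
  show ?thesis
    using f by (simp add: field_simps)
qed

theorem mainTheorem12:
  fixes m :: "nat \<Rightarrow> nat" and d :: nat
  assumes "d \<ge> 1"
    and "\<And>i. i < 2 * d \<Longrightarrow> m i > 0"
  defines "t \<equiv> tr2 (W1 m d)" and "s \<equiv> antitr (W1 m d)"
  defines "lam1 \<equiv> (t + 4*s + sqrt ((t + 4*s)^2 - 4)) / 2"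
    and "lam2 \<equiv> (t + sqrt (t^2 - 4)) / 2"
    and "lam4 \<equiv> (t - sqrt (t^2 - 4)) / 2"
    and "lam5 \<equiv> (t + 4*s - sqrt ((t + 4*s)^2 - 4)) / 2"
  shows "{k :: real. eigenvalue (Cm * Wm m d) k} = {1, lam1, lam2, lam4, lam5}
    \<and> card {1, lam1, lam2, lam4, lam5} = 5
    \<and> (\<forall>k \<in> {1, lam1, lam2, lam4, lam5}. k > 0)
    \<and> lam1 > lam2 \<and> lam2 > 1 \<and> 1 > lam4 \<and> lam4 > lam5"
proof -
  define W where "W = W1 m d"
  have SW: "S W" unfolding W_def W1_def using word_S assms(1,2) by blast
  define a where "a = W$$(0,0)"
  define b where "b = W$$(0,1)"
  define c where "c = W$$(1,0)"
  define e where "e = W$$(1,1)"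
  have h: "a \<ge> 2" "b \<ge> 1" "c \<ge> 1" "e \<ge> 1" "a*e - b*c = 1"
    using SW unfolding S_def a_def b_def c_def e_def by auto
  have tdef: "t = a + e" unfolding t_def tr2_def W_def[symmetric] a_def e_def by simp
  have sdef: "s = b + c" unfolding s_def antitr_def W_def[symmetric] b_def c_def by simp
  have t2: "t > 2" "t < t + 4*s" using h tdef sdef by auto
  have WF: "Wm m d = F W" unfolding Wm_def W_def W1_def F_word ..
  have carr: "Cm * F W \<in> carrier_mat 5 5" by (rule carrier_matI) simp_all
  have ev: "eigenvalue (Cm * Wm m d) k \<longleftrightarrow>
       k = 1 \<or> k^2 - t*k + 1 = 0 \<or> k^2 - (t+4*s)*k + 1 = 0" for k
  proof -
    have "eigenvalue (Cm * Wm m d) k \<longleftrightarrow> - (k-1) * (k^2 - (a+e)*k + 1) * (k^2 - (a+e+4*(b+c))*k+1) = 0"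
      unfolding WF eigenvalue_det[OF carr] CF a_def[symmetric] b_def[symmetric] c_def[symmetric] e_def[symmetric]
      det5[OF h(5)] ..
    then show ?thesis unfolding tdef sdef by simp
  qed
  have q1: "k^2 - t*k + 1 = 0 \<longleftrightarrow> k = lam2 \<or> k = lam4" for k
    unfolding lam2_def lam4_def using quad[OF t2(1)] by blast
  have q2: "k^2 - (t+4*s)*k + 1 = 0 \<longleftrightarrow> k = lam1 \<or> k = lam5" for k
    unfolding lam1_def lam5_def using quad[of "t+4*s"] t2 by simp
  have o: "lam1 > lam2 \<and> lam2 > 1 \<and> 1 > lam4 \<and> lam4 > lam5 \<and> lam5 > 0"
    unfolding lam1_def lam2_def lam4_def lam5_def using order[OF t2 refl refl] by simp
  have set: "{k :: real. eigenvalue (Cm * Wm m d) k} = {1, lam1, lam2, lam4, lam5}"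
    unfolding ev q1 q2 by auto
  have card: "card {1, lam1, lam2, lam4, lam5} = 5" using o by auto
  show ?thesis using set card o by auto
qed


end
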